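(* Let $(M,\cdot,1)$ be a monoid and $\Sigma$ a finite alphabet. Let $A1,\dots,An$ be $n\ge1$ minimal and transition-equalized $M$-DFAs, and for each $k$ let $(g_{Ak},f_{Ak})$ be the natural factorization on $L$ induced by $Ak$ (for some selection function). Let $(g,f)=(g_{A1},f_{A1})\ast(g_{A2},f_{A2})\ast\cdots\ast(g_{An},f_{An})$. Then $$\mathrm{RcgCap}^{(g,f)}_L\supseteq\bigcup_{k=1}^n\mathrm{RcgCap}^{(g_{Ak},f_{Ak})}_L.$$
   Context: $L$ is the set of all functions $\Sigma^*\to M$; $\varepsilon$ the empty word; $(m\cdot\ell)(\gamma)=m\cdot\ell(\gamma)$; $\Delta_\alpha(\ell)(\gamma)=\ell(\alpha\gamma)$. A factorization on $L$ is a pair $g:L\to M$, $f:L\to L$ with $g(\ell)\cdot f(\ell)=\ell$. The composition is $(g_1,f_1)\ast(g_2,f_2)=(g_1\cdot(g_2\circ f_1),f_2\circ f_1)$ with $(g\cdot g')(\ell)=g(\ell)\cdot g'(\ell)$ (associative). Define $S^{(g,f)}_\varepsilon=\mathrm{id}_L$, $S^{(g,f)}_{\alpha\sigma}=f\circ\Delta_\sigma\circ S^{(g,f)}_\alpha$. $\mathrm{RcgCap}^{(g,f)}_L$ is the set of $\ell\in L$ such that $\{S^{(g,f)}_\alpha(f(\ell))\mid\alpha\in\Sigma^*\}$ is finite (equivalently, the automaton $N^{(g,f)}(f(\ell),1)$ with these states is an $M$-DFA). An $M$-DFA is $A=(Q,\Sigma,u,i_u,\delta,w,\rho)$ with $Q$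 finite nonempty, initial state $u$, initial value $i_u\in M$, $\delta:Q\times\Sigma\to Q$, $w:Q\times\Sigma\to M$, $\rho:Q\to M$; with $q\alpha$ the extended transition and $w^*(q,\varepsilon)=1$, $w^*(q,\alpha\sigma)=w^*(q,\alpha)\cdot w(q\alpha,\sigma)$, $\mathcal{A}(\alpha)=i_u\cdot w^*(u,\alpha)\cdot\rho(u\alpha)$ is its language and $\mathcal{A}_q(\alpha)=w^*(q,\alpha)\cdot\rho(q\alpha)$. Minimal: no $M$-DFA with the same language has fewer states. Transition-equalized: $\Delta_\sigma(\mathcal{A}_q)=\Delta_\tau(\mathcal{A}_p)$ implies $\delta(q,\sigma)=\delta(p,\tau)$ and $w(q,\sigma)=w(p,\tau)$. Natural factorization induced by $A$: $P_A=\{((\sigma,q),\Delta_\sigma(\mathcal{A}_q))\mid\sigma\in\Sigma,q\in Q\}\cup\{((\varepsilon,u),\mathcal{A})\}$, with elements equivalent iff their language components are equal; a selection function $\pi$ chooses a representative per class, always $((\varepsilon,u),\mathcal{A})$ for its class. $f_A(\mathcal{A})=\mathcal{A}_u$, $g_A(\mathcal{A})=i_u$; if $\ell\neq\mathcal{A}$ is the language component of a class with representative $((\sigma,q),\Delta_\sigma(\mathcal{A}_q))$, then $f_A(\ell)=\mathcal{A}_{q\sigma}$, $g_A(\ell)=w(q,\sigma)$; otherwise $f_A(\ell)=\ell$, $g_A(\ell)=1$. *)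

theory Defs
  imports Main
begin

type_synonym ('a, 'm) lang = "'a list \<Rightarrow> 'm"

definition scal :: "'m::monoid_mult \<Rightarrow> ('a, 'm) lang \<Rightarrow> ('a, 'm) lang" where
  "scal m l = (\<lambda>\<gamma>. m * l \<gamma>)"

definition Delta :: "'a \<Rightarrow> ('a, 'm) lang \<Rightarrow> ('a, 'm) lang" where
  "Delta \<sigma> l = (\<lambda>\<gamma>. l (\<sigma> # \<gamma>))"

type_synonym ('a, 'm) fact = "(('a, 'm) lang \<Rightarrow> 'm) \<times> (('a, 'm) lang \<Rightarrow> ('a, 'm) lang)"

definition is_factorization :: "('a, 'm::monoid_mult) fact \<Rightarrow> bool" where
  "is_factorization gf \<longleftrightarrow> (\<forall>l. scal (fst gf l) (snd gf l) = l)"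

definition fact_comp :: "('a, 'm::monoid_mult) fact \<Rightarrow> ('a, 'm) fact \<Rightarrow> ('a, 'm) fact" where
  "fact_comp gf1 gf2 =
     ((\<lambda>l. fst gf1 l * fst gf2 (snd gf1 l)), snd gf2 \<circ> snd gf1)"

text \<open>Composition of a nonempty list of factorizations (composition is associative).\<close>
fun fact_comp_list :: "('a, 'm::monoid_mult) fact list \<Rightarrow> ('a, 'm) fact" where
  "fact_comp_list [] = (\<lambda>_. 1, id)"
| "fact_comp_list [x] = x"
| "fact_comp_list (x # xs) = fact_comp x (fact_comp_list xs)"

text \<open>S_eps = id, S_{\<alpha>\<sigma>} = f \<circ> \<Delta>_\<sigma> \<circ> S_\<alpha>.\<close>
definition S_op :: "('a, 'm) fact \<Rightarrow> 'a list \<Rightarrow> ('a, 'm) lang \<Rightarrow> ('a, 'm) lang" where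
  "S_op gf \<alpha> = foldl (\<lambda>h \<sigma>. snd gf \<circ> Delta \<sigma> \<circ> h) id \<alpha>"

definition RcgCap :: "('a, 'm) fact \<Rightarrow> ('a, 'm) lang set" where
  "RcgCap gf = {l. finite {S_op gf \<alpha> (snd gf l) | \<alpha>. True}}"

record ('q, 'a, 'm) mdfa =
  states :: "'q set"
  init :: 'q
  initval :: 'm
  delta :: "'q \<Rightarrow> 'a \<Rightarrow> 'q"
  wt :: "'q \<Rightarrow> 'a \<Rightarrow> 'm"
  rho :: "'q \<Rightarrow> 'm"

definition wf_mdfa :: "('q, 'a, 'm) mdfa \<Rightarrow> bool" where
  "wf_mdfa A \<longleftrightarrow> finite (states A) \<and> states A \<noteq> {} \<and> init A \<in> states A
     \<and> (\<forall>q\<in>states A. \<forall>\<sigma>. delta A q \<sigma> \<in> states A)"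

definition delta_star :: "('q, 'a, 'm) mdfa \<Rightarrow> 'q \<Rightarrow> 'a list \<Rightarrow> 'q" where
  "delta_star A q \<alpha> = foldl (delta A) q \<alpha>"

text \<open>w*(q,eps) = 1, w*(q,\<alpha>\<sigma>) = w*(q,\<alpha>) \<cdot> w(q\<alpha>,\<sigma>).\<close>
definition wstar :: "('q, 'a, 'm::monoid_mult) mdfa \<Rightarrow> 'q \<Rightarrow> 'a list \<Rightarrow> 'm" where
  "wstar A q \<alpha> = fst (foldl (\<lambda>(m, p) \<sigma>. (m * wt A p \<sigma>, delta A p \<sigma>)) (1, q) \<alpha>)"

definition lang_from :: "('q, 'a, 'm::monoid_mult) mdfa \<Rightarrow> 'q \<Rightarrow> ('a, 'm) lang" where
  "lang_from A q = (\<lambda>\<alpha>. wstar A q \<alpha> * rho A (delta_star A q \<alpha>))"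

definition lang :: "('q, 'a, 'm::monoid_mult) mdfa \<Rightarrow> ('a, 'm) lang" where
  "lang A = (\<lambda>\<alpha>. initval A * wstar A (init A) \<alpha> * rho A (delta_star A (init A) \<alpha>))"

text \<open>Minimality: no M-DFA with the same language has fewer states.  Competitors range over
  M-DFAs with states in nat, which covers every finite state set up to renaming.\<close>
definition minimal_mdfa :: "('q, 'a, 'm::monoid_mult) mdfa \<Rightarrow> bool" where
  "minimal_mdfa A \<longleftrightarrow>
     (\<forall>B :: (nat, 'a, 'm) mdfa. wf_mdfa B \<and> lang B = lang A \<longrightarrow> card (states A) \<le> card (states B))"

definition transition_equalized :: "('q, 'a, 'm::monoid_mult) mdfa \<Rightarrow> bool" where
  "transition_equalized A \<longleftrightarrow>
     (\<forall>q\<in>states A. \<forall>p\<in>states A. \<forall>\<sigma> \<tau>.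
        Delta \<sigma> (lang_from A q) = Delta \<tau> (lang_from A p) \<longrightarrow>
        delta A q \<sigma> = delta A p \<tau> \<and> wt A q \<sigma> = wt A p \<tau>)"

text \<open>P_A, with keys (Some \<sigma>, q) for (\<sigma>, q) and (None, u) for (eps, u).\<close>
definition P_set :: "('q, 'a, 'm::monoid_mult) mdfa \<Rightarrow> (('a option \<times> 'q) \<times> ('a, 'm) lang) set" where
  "P_set A = {((Some \<sigma>, q), Delta \<sigma> (lang_from A q)) | \<sigma> q. q \<in> states A}
             \<union> {((None, init A), lang A)}"

definition valid_selection ::
  "('q, 'a, 'm::monoid_mult) mdfa \<Rightarrow> (('a, 'm) lang \<Rightarrow> 'a option \<times> 'q) \<Rightarrow> bool" where
  "valid_selection A sel \<longleftrightarrow>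
     (\<forall>l \<in> snd ` P_set A. (sel l, l) \<in> P_set A) \<and> sel (lang A) = (None, init A)"

definition nat_fact ::
  "('q, 'a, 'm::monoid_mult) mdfa \<Rightarrow> (('a, 'm) lang \<Rightarrow> 'a option \<times> 'q) \<Rightarrow> ('a, 'm) fact" where
  "nat_fact A sel =
    ((\<lambda>l. if l = lang A then initval A
          else if l \<in> snd ` P_set A then
            (case sel l of (Some \<sigma>, q) \<Rightarrow> wt A q \<sigma> | (None, q) \<Rightarrow> 1)
          else 1),
     (\<lambda>l. if l = lang A then lang_from A (init A)
          else if l \<in> snd ` P_set A then
            (case sel l of (Some \<sigma>, q) \<Rightarrow> lang_from A (delta A q \<sigma>) | (None, q) \<Rightarrow> l)
          else l))"

end

theory Submission
  imports Defs
begin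

lemma snd_fcl: "snd (fact_comp_list fs) = fold snd fs"
  by (induction fs rule: fact_comp_list.induct) (auto simp: fact_comp_def)

lemma fold_prop:
  assumes "\<And>k v. k \<in> set ks \<Longrightarrow> v \<in> C k \<Longrightarrow> f k v \<in> TT"
    and "\<And>k v. k \<in> set ks \<Longrightarrow> v \<notin> C k \<Longrightarrow> f k v = v"
  shows "(v \<in> TT \<or> v \<in> (\<Union>k\<in>set ks. C k) \<longrightarrow> fold f ks v \<in> TT) \<and>
         (v \<notin> (\<Union>k\<in>set ks. C k) \<longrightarrow> fold f ks v = v)"
  using assms
proof (induction ks arbitrary: v)
  case Nil
  then show ?case by simp
next
  case (Cons a ks)
  have IH: "\<And>v. (v \<in> TT \<or> v \<in> (\<Union>k\<in>set ks. C k) \<longrightarrow> fold f ks v \<in> TT) \<and>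
         (v \<notin> (\<Union>k\<in>set ks. C k) \<longrightarrow> fold f ks v = v)"
    using Cons by simp
  show ?case
  proof (cases "v \<in> C a")
    case True
    then have "f a v \<in> TT" using Cons.prems by simp
    then show ?thesis using IH[of "f a v"] True by auto
  next
    case False
    then have "f a v = v" using Cons.prems by simp
    then show ?thesis using IH[of v] False by auto
  qed
qed

lemma S_op_snoc: "S_op gf (\<alpha> @ [\<sigma>]) x = snd gf (Delta \<sigma> (S_op gf \<alpha> x))"
  by (simp add: S_op_def)

lemma S_op_nil: "S_op gf [] x = x"
  by (simp add: S_op_def)

lemma orbit_abstract:
  assumes h1: "\<And>k v. k \<in> set ks \<Longrightarrow> v \<in> C k \<Longrightarrow> f k v \<in> TT"
    and h2: "\<And>k v. k \<in> set ks \<Longrightarrow> v \<notin> C k \<Longrightarrow> f k v = v"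
    and cl: "\<And>t \<sigma>. t \<in> TT \<Longrightarrow> Delta \<sigma> t \<in> (\<Union>k\<in>set ks. C k)"
    and kin: "k \<in> set ks"
    and G: "snd G = fold f ks"
    and K: "snd K = f k"
  shows "S_op G \<alpha> (snd G l) \<in> TT \<or> S_op G \<alpha> (snd G l) = S_op K \<alpha> (snd K l)"
proof (induction \<alpha> rule: rev_induct)
  case Nil
  note fp = fold_prop[where ks=ks and C=C and f=f and TT=TT, OF h1 h2]
  show ?case
  proof (cases "l \<in> C k")
    case True
    then show ?thesis using fp[where v=l] kin G by (auto simp: S_op_nil)
  next
    case False
    then have "f k l = l" using h2 kin by simp
    then show ?thesis using fp[where v=l] G K by (auto simp: S_op_nil)
  qed
next
  case (snoc \<sigma> \<alpha>)
  note fp = fold_prop[where ks=ks and C=C and f=f and TT=TT, OF h1 h2]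
  let ?x = "S_op G \<alpha> (snd G l)"
  let ?y = "Delta \<sigma> ?x"
  show ?case
  proof (cases "?x \<in> TT")
    case True
    then have "?y \<in> (\<Union>k\<in>set ks. C k)" using cl by blast
    then show ?thesis using fp[where v="?y"] G by (simp add: S_op_snoc)
  next
    case False
    then have eq: "?x = S_op K \<alpha> (snd K l)" using snoc by blast
    show ?thesis
    proof (cases "?y \<in> (\<Union>k\<in>set ks. C k)")
      case True
      then show ?thesis using fp[where v="?y"] G by (simp add: S_op_snoc)
    next
      case False
      then have "?y \<notin> C k" using kin by blast
      then have "f k ?y = ?y" using h2 kin by simp
      then show ?thesis using fp[where v="?y"] False G K eq by (simp add: S_op_snoc)
    qed
  qed
qed

lemma orbit_finite:
  assumes h1: "\<And>k v. k \<in> set ks \<Longrightarrow> v \<in> C k \<Longrightarrow> f k v \<in> TT"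
    and h2: "\<And>k v. k \<in> set ks \<Longrightarrow> v \<notin> C k \<Longrightarrow> f k v = v"
    and cl: "\<And>t \<sigma>. t \<in> TT \<Longrightarrow> Delta \<sigma> t \<in> (\<Union>k\<in>set ks. C k)"
    and kin: "k \<in> set ks"
    and G: "snd G = fold f ks"
    and K: "snd K = f k"
    and fT: "finite TT"
    and l: "l \<in> RcgCap K"
  shows "l \<in> RcgCap G"
proof -
  have "{S_op G \<alpha> (snd G l) | \<alpha>. True} \<subseteq> TT \<union> {S_op K \<alpha> (snd K l) | \<alpha>. True}"
    using orbit_abstract[OF h1 h2 cl kin G K] by blast
  moreover have "finite {S_op K \<alpha> (snd K l) | \<alpha>. True}" using l by (simp add: RcgCap_def)
  ultimately show ?thesis using fT unfolding RcgCap_def by (auto intro: finite_subset)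
qed

lemma nat_fact_props:
  assumes wf: "wf_mdfa A" and vs: "valid_selection A sel"
  shows "v \<in> snd ` P_set A \<Longrightarrow> snd (nat_fact A sel) v \<in> lang_from A ` states A"
    and "v \<notin> snd ` P_set A \<Longrightarrow> snd (nat_fact A sel) v = v"
    and "q \<in> states A \<Longrightarrow> Delta \<sigma> (lang_from A q) \<in> snd ` P_set A"
proof -
  show "q \<in> states A \<Longrightarrow> Delta \<sigma> (lang_from A q) \<in> snd ` P_set A"
    unfolding P_set_def by (rule image_eqI[where x="((Some \<sigma>, q), Delta \<sigma> (lang_from A q))"]) auto
  have lA: "lang A \<in> snd ` P_set A" unfolding P_set_def by force
  show "v \<notin> snd ` P_set A \<Longrightarrow> snd (nat_fact A sel) v = v"
    using lA by (auto simp: nat_fact_def)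
  assume v: "v \<in> snd ` P_set A"
  show "snd (nat_fact A sel) v \<in> lang_from A ` states A"
  proof (cases "v = lang A")
    case True
    then show ?thesis using wf by (auto simp: nat_fact_def wf_mdfa_def)
  next
    case False
    have mem: "(sel v, v) \<in> P_set A" using vs v by (auto simp: valid_selection_def)
    obtain a q where sq: "sel v = (a, q)" by (cases "sel v")
    show ?thesis
    proof (cases a)
      case None
      then show ?thesis using mem sq False by (auto simp: P_set_def)
    next
      case (Some \<sigma>)
      then have "q \<in> states A" using mem sq by (auto simp: P_set_def)
      then have "delta A q \<sigma> \<in> states A" using wf by (auto simp: wf_mdfa_def)
      then show ?thesis using Some sq False v by (auto simp: nat_fact_def)
    qed
  qed
qed

theorem lemma7:
  fixes As :: "nat \<Rightarrow> ('q, 'a::finite, 'm::monoid_mult) mdfa"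
    and sels :: "nat \<Rightarrow> (('a, 'm) lang \<Rightarrow> 'a option \<times> 'q)"
    and n :: nat
  assumes "n \<ge> 1"
    and "\<And>k. k \<in> {1..n} \<Longrightarrow> wf_mdfa (As k)"
    and "\<And>k. k \<in> {1..n} \<Longrightarrow> minimal_mdfa (As k)"
    and "\<And>k. k \<in> {1..n} \<Longrightarrow> transition_equalized (As k)"
    and "\<And>k. k \<in> {1..n} \<Longrightarrow> valid_selection (As k) (sels k)"
  shows "(\<Union>k\<in>{1..n}. RcgCap (nat_fact (As k) (sels k)))
           \<subseteq> RcgCap (fact_comp_list (map (\<lambda>k. nat_fact (As k) (sels k)) [1..<n+1]))"
proof
  fix l assume "l \<in> (\<Union>k\<in>{1..n}. RcgCap (nat_fact (As k) (sels k)))"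
  then obtain k where k: "k \<in> {1..n}" and lk: "l \<in> RcgCap (nat_fact (As k) (sels k))" by blast
  let ?ks = "[1..<n+1]"
  let ?f = "\<lambda>j. snd (nat_fact (As j) (sels j))"
  let ?C = "\<lambda>j. snd ` P_set (As j)"
  let ?TT = "\<Union>j\<in>{1..n}. lang_from (As j) ` states (As j)"
  have setks: "set ?ks = {1..n}" by auto
  show "l \<in> RcgCap (fact_comp_list (map (\<lambda>k. nat_fact (As k) (sels k)) ?ks))"
  proof (rule orbit_finite[where f="?f" and C="?C" and TT="?TT" and ks="?ks" and k=k])
    fix j v assume "j \<in> set ?ks" "v \<in> ?C j"
    then show "?f j v \<in> ?TT" using nat_fact_props(1)[of "As j" "sels j" v] assms(2,5) setks by blast
  next
    fix j v assume "j \<in> set ?ks" "v \<notin> ?C j"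
    then show "?f j v = v" using nat_fact_props(2)[of "As j" "sels j" v] assms(2,5) setks by blast
  next
    fix t \<sigma> assume "t \<in> ?TT"
    then obtain j q where "j \<in> {1..n}" "q \<in> states (As j)" "t = lang_from (As j) q" by blast
    then show "Delta \<sigma> t \<in> (\<Union>j\<in>set ?ks. ?C j)"
      using nat_fact_props(3)[of "As j" "sels j" q \<sigma>] assms(2,5) setks by blast
  next
    show "k \<in> set ?ks" using k by auto
  next
    show "snd (fact_comp_list (map (\<lambda>k. nat_fact (As k) (sels k)) ?ks)) = fold ?f ?ks"
      by (simp add: snd_fcl fold_map comp_def)
  next
    show "snd (nat_fact (As k) (sels k)) = ?f k" by simp
  next
    show "finite ?TT" using assms(2) by (auto simp: wf_mdfa_def)
  next
    show "l \<in> RcgCap (nat_fact (As k) (sels k))" by (rule lk)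
  qed
qed

end
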